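(* Let $X$ be a real Banach space, $Y$ a closed subspace of $X$, $(\Omega,\Sigma,\mu)$ a complete probability space, $1\leq p<\infty$ and $n$ a positive integer. Let $f_1,\ldots,f_n\in L_p(\mu,X)$ and let $g:\Omega\to Y$ be a $\mu$-measurable function such that for almost all $s\in\Omega$, $g(s)$ is a relative $p$-center of $\{f_1(s),\ldots,f_n(s)\}$ in $Y$. Then $g\in L_p(\mu,Y)$ and $g$ is a relative $p$-center of $\{f_1,\ldots,f_n\}\subset L_p(\mu,X)$ in $L_p(\mu,Y)$, i.e. $\sum_{i=1}^n\|f_i-g\|_p^p\leq\sum_{i=1}^n\|f_i-h\|_p^p$ for all $h\in L_p(\mu,Y)$.
   Context: A function $\Omega\to X$ is $\mu$-measurable (strongly measurable) if it is the $\mu$-a.e. limit of a sequence of $\Sigma$-simple functions. $L_p(\mu,X)$ denotes the Banach space of Bochner $p$-integrable functions $\Omega\to X$ with norm $\|f\|_p=(\int_\Omega\|f(s)\|^p\,d\mu(s))^{1/p}$, and $L_p(\mu,Y)$ the subspace of those with values in $Y$. For a subset $Y$ of a normed space $X$, a finite set $\{a_1,\ldots,a_n\}\subset X$ and $m\in[1,\infty)$, a point $y_0\in Y$ is a relative $m$-center of $\{a_1,\ldots,a_n\}$ in $Y$ if $\sum_{i=1}^n\|a_i-y_0\|^m\leq\sum_{i=1}^n\|a_i-y\|^m$ for all $y\in Y$. *)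

theory Defs
  imports "HOL-Probability.Probability"
begin

definition strongly_measurable :: "'a measure \<Rightarrow> ('a \<Rightarrow> 'b::real_normed_vector) \<Rightarrow> bool" where
  "strongly_measurable M f \<longleftrightarrow>
     (\<exists>s. (\<forall>k. simple_function M (s k)) \<and> (AE x in M. (\<lambda>k. s k x) \<longlonglongrightarrow> f x))"

text \<open>Bochner p-integrable functions (as functions, not equivalence classes).\<close>
definition Lp_set :: "'a measure \<Rightarrow> real \<Rightarrow> ('a \<Rightarrow> 'b::real_normed_vector) set" where
  "Lp_set M p = {f. strongly_measurable M f \<and>
                     (\<integral>\<^sup>+ x. ennreal (norm (f x) powr p) \<partial>M) < \<infinity>}"

definition Lp_sub :: "'a measure \<Rightarrow> real \<Rightarrow> 'b::real_normed_vector set \<Rightarrow> ('a \<Rightarrow> 'b) set" where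
  "Lp_sub M p Y = {f \<in> Lp_set M p. AE x in M. f x \<in> Y}"

definition Lp_norm :: "'a measure \<Rightarrow> real \<Rightarrow> ('a \<Rightarrow> 'b::real_normed_vector) \<Rightarrow> real" where
  "Lp_norm M p f = (\<integral>x. norm (f x) powr p \<partial>M) powr (1 / p)"

definition relative_center :: "'b::real_normed_vector set \<Rightarrow> (nat \<Rightarrow> 'b) \<Rightarrow> nat \<Rightarrow> real \<Rightarrow> 'b \<Rightarrow> bool" where
  "relative_center Y a n m y0 \<longleftrightarrow> y0 \<in> Y \<and>
     (\<forall>y\<in>Y. (\<Sum>i=1..n. norm (a i - y0) powr m) \<le> (\<Sum>i=1..n. norm (a i - y) powr m))"

end

theory Submission
  imports Defs
begin

lemma sm_meas:
  assumes cm: "complete_measure M" and sm: "strongly_measurable M u"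
  shows "u \<in> borel_measurable M"
proof -
  obtain s where s1: "\<And>k. simple_function M (s k)" and s2: "AE x in M. (\<lambda>k. s k x) \<longlonglongrightarrow> u x"
    using sm unfolding strongly_measurable_def by blast
  define N where "N = {x\<in>space M. \<not> (\<lambda>k. s k x) \<longlonglongrightarrow> u x}"
  have N: "N \<in> null_sets M"
    using complete_measure.AE_iff_null_sets[OF cm, of "\<lambda>x. (\<lambda>k. s k x) \<longlonglongrightarrow> u x"] s2 unfolding N_def by simp
  define v where "v x = (if x \<in> N then 0 else u x)" for x
  have sm': "(\<lambda>x. if x \<in> N then 0 else s k x) \<in> borel_measurable M" for k
    apply (rule measurable_If_set)
    using N s1 borel_measurable_simple_function by auto
  have vm: "v \<in> borel_measurable M"
    apply (rule borel_measurable_LIMSEQ_metric[OF sm'])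
    by (auto simp: v_def N_def)
  show ?thesis
  proof (rule measurableI)
    fix x assume "x \<in> space M" then show "u x \<in> space borel" by simp
  next
    fix A :: "'b set" assume A: "A \<in> sets borel"
    show "u -` A \<inter> space M \<in> sets M"
    proof (rule complete_measure.in_sets_AE[OF cm])
      show "v -` A \<inter> space M \<in> sets M" using vm A by (rule measurable_sets)
      show "u -` A \<inter> space M \<subseteq> space M" by auto
      show "AE x in M. (x \<in> v -` A \<inter> space M) = (x \<in> u -` A \<inter> space M)"
        using s2 by eventually_elim (auto simp: v_def N_def)
    qed
  qed
qed

lemma powr_sum_bound:
  fixes a b p :: real assumes "a \<ge> 0" "b \<ge> 0" "p > 0"
  shows "(a + b) powr p \<le> 2 powr p * (a powr p + b powr p)"
proof -
  have "(a + b) powr p \<le> (2 * max a b) powr p"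
    by (rule powr_mono2) (use assms in auto)
  also have "\<dots> = 2 powr p * (max a b) powr p"
    using assms by (simp add: powr_mult)
  also have "(max a b) powr p \<le> a powr p + b powr p"
    by (cases "a \<le> b") (auto simp: max_def)
  then have "2 powr p * (max a b) powr p \<le> 2 powr p * (a powr p + b powr p)"
    by (simp)
  finally show ?thesis .
qed

lemma Lp_integrable:
  assumes cm: "complete_measure M" and u: "u \<in> Lp_set M p"
  shows "integrable M (\<lambda>x. norm (u x) powr p)" "u \<in> borel_measurable M"
proof -
  show um: "u \<in> borel_measurable M" using sm_meas[OF cm] u unfolding Lp_set_def by blast
  show "integrable M (\<lambda>x. norm (u x) powr p)"
    apply (rule integrableI_bounded)
    using um u unfolding Lp_set_def by auto
qed

lemma sm_diff:
  assumes "strongly_measurable M u" "strongly_measurable M v"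
  shows "strongly_measurable M (\<lambda>x. u x - v x)"
proof -
  obtain s where s1: "\<And>k. simple_function M (s k)" and s2: "AE x in M. (\<lambda>k. s k x) \<longlonglongrightarrow> u x"
    using assms(1) unfolding strongly_measurable_def by blast
  obtain t where t1: "\<And>k. simple_function M (t k)" and t2: "AE x in M. (\<lambda>k. t k x) \<longlonglongrightarrow> v x"
    using assms(2) unfolding strongly_measurable_def by blast
  show ?thesis unfolding strongly_measurable_def
  proof (intro exI conjI allI)
    show "simple_function M (\<lambda>x. s k x - t k x)" for k
      by (rule simple_function_compose2[OF s1 t1])
    show "AE x in M. (\<lambda>k. s k x - t k x) \<longlonglongrightarrow> u x - v x"
      using s2 t2 by eventually_elim (rule tendsto_diff)
  qed
qed

lemma Lp_diff_integrable:
  fixes u v :: "'a \<Rightarrow> 'b::real_normed_vector"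
  assumes cm: "complete_measure M" and u: "u \<in> Lp_set M p" and v: "v \<in> Lp_set M p" and p: "p > 0"
  shows "integrable M (\<lambda>x. norm (u x - v x) powr p)"
proof (rule Bochner_Integration.integrable_bound)
  show "integrable M (\<lambda>x. 2 powr p * (norm (u x) powr p + norm (v x) powr p))"
    using Lp_integrable[OF cm u] Lp_integrable[OF cm v] by auto
  have [measurable]: "(\<lambda>x. u x - v x) \<in> borel_measurable M"
    using sm_meas[OF cm sm_diff] u v unfolding Lp_set_def by blast
  show "(\<lambda>x. norm (u x - v x) powr p) \<in> borel_measurable M"
    by measurable
  show "AE x in M. norm (norm (u x - v x) powr p) \<le> norm (2 powr p * (norm (u x) powr p + norm (v x) powr p))"
  proof (intro AE_I2)
    fix x
    have "norm (u x - v x) powr p \<le> (norm (u x) + norm (v x)) powr p"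
      by (rule powr_mono2) (use p norm_triangle_ineq4 in auto)
    also have "\<dots> \<le> 2 powr p * (norm (u x) powr p + norm (v x) powr p)"
      by (rule powr_sum_bound) (use p in auto)
    finally show "norm (norm (u x - v x) powr p) \<le> norm (2 powr p * (norm (u x) powr p + norm (v x) powr p))"
      by simp
  qed
qed

lemma Lp_norm_pow:
  assumes "p > 0"
  shows "Lp_norm M p u powr p = (\<integral>x. norm (u x) powr p \<partial>M)"
proof -
  have "0 \<le> (\<integral>x. norm (u x) powr p \<partial>M)" by (rule integral_nonneg_AE) auto
  then show ?thesis unfolding Lp_norm_def using assms by (simp add: powr_powr)
qed

theorem mainTheorem4:
  fixes M :: "'a measure" and Y :: "'b::banach set" and p :: real and n :: nat
    and f :: "nat \<Rightarrow> 'a \<Rightarrow> 'b" and g :: "'a \<Rightarrow> 'b"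
  assumes "prob_space M" and "complete_measure M"
    and "subspace Y" and "closed Y"
    and "1 \<le> p" and "n \<ge> 1"
    and "\<And>i. i \<in> {1..n} \<Longrightarrow> f i \<in> Lp_set M p"
    and "\<And>s. s \<in> space M \<Longrightarrow> g s \<in> Y"
    and "strongly_measurable M g"
    and "AE s in M. relative_center Y (\<lambda>i. f i s) n p (g s)"
  shows "g \<in> Lp_sub M p Y \<and>
    (\<forall>h \<in> Lp_sub M p Y. (\<Sum>i=1..n. Lp_norm M p (\<lambda>s. f i s - g s) powr p)
                          \<le> (\<Sum>i=1..n. Lp_norm M p (\<lambda>s. f i s - h s) powr p))"
proof -
  note cm = assms(2)
  have p: "p > 0" using assms(5) by simp
  have n1: "1 \<in> {1..n}" using assms(6) by simp
  have gm: "g \<in> borel_measurable M" by (rule sm_meas[OF cm assms(9)])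
  have fi: "\<And>i. i \<in> {1..n} \<Longrightarrow> integrable M (\<lambda>x. norm (f i x) powr p)"
    using Lp_integrable(1)[OF cm assms(7)] by blast
  have bnd: "AE s in M. norm (norm (g s) powr p) \<le>
      norm (2 powr p * (norm (f 1 s) powr p + (\<Sum>i=1..n. norm (f i s) powr p)))"
    using assms(10)
  proof eventually_elim
    case (elim s)
    have "(\<Sum>i=1..n. norm (f i s - g s) powr p) \<le> (\<Sum>i=1..n. norm (f i s - 0) powr p)"
      using elim assms(3) unfolding relative_center_def by (meson subspace_0)
    moreover have "norm (f 1 s - g s) powr p \<le> (\<Sum>i=1..n. norm (f i s - g s) powr p)"
      by (rule member_le_sum[OF n1]) auto
    ultimately have A: "norm (f 1 s - g s) powr p \<le> (\<Sum>i=1..n. norm (f i s) powr p)" by simp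
    have "norm (g s) powr p \<le> (norm (f 1 s) + norm (f 1 s - g s)) powr p"
      by (rule powr_mono2) (use p norm_triangle_ineq4[of "f 1 s" "f 1 s - g s"] in auto)
    also have "\<dots> \<le> 2 powr p * (norm (f 1 s) powr p + norm (f 1 s - g s) powr p)"
      by (rule powr_sum_bound) (use p in auto)
    also have "\<dots> \<le> 2 powr p * (norm (f 1 s) powr p + (\<Sum>i=1..n. norm (f i s) powr p))"
      using A by simp
    finally show ?case
      by (simp add: sum_nonneg)
  qed
  have gint: "integrable M (\<lambda>s. norm (g s) powr p)"
  proof (rule Bochner_Integration.integrable_bound[OF _ _ bnd])
    show "integrable M (\<lambda>s. 2 powr p * (norm (f 1 s) powr p + (\<Sum>i=1..n. norm (f i s) powr p)))"
      using fi n1 by (intro integrable_mult_right Bochner_Integration.integrable_add integrable_sum) auto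
    show "(\<lambda>s. norm (g s) powr p) \<in> borel_measurable M" using gm by measurable
  qed
  have "(\<integral>\<^sup>+ x. ennreal (norm (norm (g x) powr p)) \<partial>M) < \<infinity>"
    using gint by (simp add: integrable_iff_bounded)
  then have gL: "g \<in> Lp_set M p"
    using assms(9) unfolding Lp_set_def by simp
  have gS: "g \<in> Lp_sub M p Y"
    unfolding Lp_sub_def using gL assms(8) by auto
  have "(\<Sum>i=1..n. Lp_norm M p (\<lambda>s. f i s - g s) powr p)
          \<le> (\<Sum>i=1..n. Lp_norm M p (\<lambda>s. f i s - h s) powr p)" if h: "h \<in> Lp_sub M p Y" for h
  proof -
    have hL: "h \<in> Lp_set M p" and hY: "AE x in M. h x \<in> Y" using h unfolding Lp_sub_def by auto
    have "(\<Sum>i=1..n. Lp_norm M p (\<lambda>s. f i s - g s) powr p)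
        = (\<Sum>i=1..n. \<integral>s. norm (f i s - g s) powr p \<partial>M)"
      using p by (simp add: Lp_norm_pow)
    also have "\<dots> = (\<integral>s. (\<Sum>i=1..n. norm (f i s - g s) powr p) \<partial>M)"
      using Bochner_Integration.integral_sum[where I="{1..n}" and f="\<lambda>i s. norm (f i s - g s) powr p"] Lp_diff_integrable[OF cm assms(7) gL p] by simp
    also have "\<dots> \<le> (\<integral>s. (\<Sum>i=1..n. norm (f i s - h s) powr p) \<partial>M)"
    proof (rule integral_mono_AE)
      show "integrable M (\<lambda>s. \<Sum>i=1..n. norm (f i s - g s) powr p)"
        using Lp_diff_integrable[OF cm assms(7) gL p] by auto
      show "integrable M (\<lambda>s. \<Sum>i=1..n. norm (f i s - h s) powr p)"
        using Lp_diff_integrable[OF cm assms(7) hL p] by auto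
      show "AE s in M. (\<Sum>i=1..n. norm (f i s - g s) powr p) \<le> (\<Sum>i=1..n. norm (f i s - h s) powr p)"
        using assms(10) hY by eventually_elim (auto simp: relative_center_def)
    qed
    also have "\<dots> = (\<Sum>i=1..n. \<integral>s. norm (f i s - h s) powr p \<partial>M)"
      using Bochner_Integration.integral_sum[where I="{1..n}" and f="\<lambda>i s. norm (f i s - h s) powr p"] Lp_diff_integrable[OF cm assms(7) hL p] by simp
    also have "\<dots> = (\<Sum>i=1..n. Lp_norm M p (\<lambda>s. f i s - h s) powr p)"
      using p by (simp add: Lp_norm_pow)
    finally show ?thesis .
  qed
  then show ?thesis using gS by blast
qed

end
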